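(* Let $K$ be uniformly distributed on $\{0,1\}^N$, let $\mathcal L$ be a finite set and $\Psi:\{0,1\}^N\to\mathcal L$. For $\lambda\in\mathcal L$ put $S_\lambda := \Psi^{-1}(\lambda)$, let $\mathbb P_\lambda(\cdot) := \mathbb P(\cdot\mid \Psi(K)=\lambda)$ (so $K$ is uniform on $S_\lambda$ under $\mathbb P_\lambda$), and write $\mathbb E_\lambda$ for expectation under $\mathbb P_\lambda$. For $1\le r\le d$ and probes $p_1,\dots,p_r\in\{1,\dots,N\}$ define \[ g_\lambda(p_1,\dots,p_r) := \sum_{x\in\{0,1\}^r}\mathbb P_\lambda\big((K[p_1],\dots,K[p_r]) = x\big)^2. \] Let $P_1,\dots,P_d$ be independent uniform elements of $\{1,\dots,N\}$, independent of $K$. Let $\alpha\ge 0$ with $\alpha+d\le N$. If $\log_2|S_\lambda| \ge N-\alpha$, then \[ \mathbb E_\lambda\big[g_\lambda(P_1,\dots,P_d)\big] \le \Big[h^{-1}\Big(1-\frac{\alpha+d}{N}\Big)\Big]^d. \]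
   Context: $K[i]$ is the $i$-th bit of $K$. $h(p)=p\log_2\frac1p+(1-p)\log_2\frac1{1-p}$ is the binary entropy function on $[0,1]$; $h^{-1}:[0,1]\to[1/2,1]$ is the inverse of the restriction of $h$ to $[1/2,1]$ (a strictly decreasing bijection onto $[0,1]$). *)

theory Defs
  imports "HOL-Analysis.Analysis"
begin

text \<open>Bit strings in {0,1}^N, indexed by 1..N (bit i of k is k i).\<close>
definition cube :: "nat \<Rightarrow> (nat \<Rightarrow> bool) set" where
  "cube N = PiE {1..N} (\<lambda>_. UNIV)"

definition fiber :: "nat \<Rightarrow> ((nat \<Rightarrow> bool) \<Rightarrow> 'l) \<Rightarrow> 'l \<Rightarrow> (nat \<Rightarrow> bool) set" where
  "fiber N Psi lam = {k \<in> cube N. Psi k = lam}"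

definition cond_prob ::
  "nat \<Rightarrow> ((nat \<Rightarrow> bool) \<Rightarrow> 'l) \<Rightarrow> 'l \<Rightarrow> nat \<Rightarrow> (nat \<Rightarrow> nat) \<Rightarrow> (nat \<Rightarrow> bool) \<Rightarrow> real" where
  "cond_prob N Psi lam r p x =
     real (card {k \<in> fiber N Psi lam. \<forall>j\<in>{1..r}. k (p j) = x j}) / real (card (fiber N Psi lam))"

definition g_fun :: "nat \<Rightarrow> ((nat \<Rightarrow> bool) \<Rightarrow> 'l) \<Rightarrow> 'l \<Rightarrow> nat \<Rightarrow> (nat \<Rightarrow> nat) \<Rightarrow> real" where
  "g_fun N Psi lam r p = (\<Sum>x\<in>PiE {1..r} (\<lambda>_. UNIV). (cond_prob N Psi lam r p x)^2)"

text \<open>E_lambda[g(P_1,...,P_d)], with P_1..P_d iid uniform on {1..N}, independent of K\<close>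
definition expected_g :: "nat \<Rightarrow> ((nat \<Rightarrow> bool) \<Rightarrow> 'l) \<Rightarrow> 'l \<Rightarrow> nat \<Rightarrow> real" where
  "expected_g N Psi lam d =
     (\<Sum>p\<in>PiE {1..d} (\<lambda>_. {1..N}). g_fun N Psi lam d p) / real N ^ d"

definition bin_entropy :: "real \<Rightarrow> real" where
  "bin_entropy p = p * log 2 (1/p) + (1 - p) * log 2 (1/(1 - p))"

definition bin_entropy_inv :: "real \<Rightarrow> real" where
  "bin_entropy_inv y = (THE p. p \<in> {1/2..1} \<and> bin_entropy p = y)"

end

theory Submission
  imports Defs "HOL-Real_Asymp.Real_Asymp"
begin

lemma h_alt: assumes "0 \<le> x" "x \<le> 1"
  shows "bin_entropy x = - (x * ln x + (1 - x) * ln (1 - x)) / ln 2"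
proof -
  have a: "y * log 2 (1/y) = - (y * ln y) / ln 2" if "0 \<le> y" for y :: real
  proof (cases "y = 0")
    case False with that show ?thesis by (simp add: log_def ln_div)
  qed simp
  show ?thesis using a[of x] a[of "1-x"] assms unfolding bin_entropy_def by (simp add: field_simps)
qed

lemma h_sym: "bin_entropy (1 - x) = bin_entropy x"
  unfolding bin_entropy_def by simp

lemma xl_convex_pos: "convex_on {0<..} (\<lambda>x::real. x * ln x)"
proof (rule convex_on_realI[where f' = "\<lambda>x. ln x + 1"])
  show "connected {0::real<..}" by simp
  fix x :: real assume "x \<in> {0<..}"
  then show "((\<lambda>x. x * ln x) has_real_derivative ln x + 1) (at x)"
    by (auto intro!: derivative_eq_intros)
next
  fix x y :: real assume "x \<in> {0<..}" "y \<in> {0<..}" "x \<le> y"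
  then show "ln x + 1 \<le> ln y + 1" by simp
qed

lemma xl_convex: "convex_on {0..} (\<lambda>x::real. x * ln x)"
proof (rule convex_on_linorderI)
  show "convex {0::real..}" by simp
  fix t x y :: real assume t: "0 < t" "t < 1" and xy: "x \<in> {0..}" "y \<in> {0..}" "x < y"
  show "(\<lambda>x. x * ln x) ((1 - t) *\<^sub>R x + t *\<^sub>R y) \<le> (1 - t) * (\<lambda>x. x * ln x) x + t * (\<lambda>x. x * ln x) y"
  proof (cases "x = 0")
    case True
    have y: "y > 0" using xy True by simp
    have "t * y * ln (t * y) = t * y * ln t + t * y * ln y" using t y by (simp add: ln_mult algebra_simps)
    moreover have "t * y * ln t \<le> 0" using t y by (simp add: mult_nonneg_nonpos)
    ultimately show ?thesis using True by simp
  next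
    case False
    then show ?thesis using convex_onD[OF xl_convex_pos, of t x y] t xy by auto
  qed
qed

lemma negh_convex: "convex_on {0..1} (\<lambda>x. - bin_entropy x)"
proof -
  have c: "convex_on {0..1} (\<lambda>x::real. (x * ln x + (1 - x) * ln (1 - x)) / ln 2)"
    unfolding convex_on_def
  proof (intro conjI ballI allI impI)
    show "convex {0..1::real}" by simp
    fix x y u v :: real assume xy: "x \<in> {0..1}" "y \<in> {0..1}" and uv: "0 \<le> u" "0 \<le> v" "u + v = 1"
    have 1: "(u * x + v * y) * ln (u * x + v * y) \<le> u * (x * ln x) + v * (y * ln y)"
      using xl_convex[unfolded convex_on_def] xy uv by auto
    have e: "1 - (u * x + v * y) = u * (1 - x) + v * (1 - y)" using uv by (simp add: algebra_simps)
    have 2: "(1 - (u * x + v * y)) * ln (1 - (u * x + v * y)) \<le> u * ((1 - x) * ln (1 - x)) + v * ((1 - y) * ln (1 - y))"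
      unfolding e using xl_convex[unfolded convex_on_def] xy uv by auto
    show "((u *\<^sub>R x + v *\<^sub>R y) * ln (u *\<^sub>R x + v *\<^sub>R y) + (1 - (u *\<^sub>R x + v *\<^sub>R y)) * ln (1 - (u *\<^sub>R x + v *\<^sub>R y))) / ln 2
       \<le> u * ((x * ln x + (1 - x) * ln (1 - x)) / ln 2) + v * ((y * ln y + (1 - y) * ln (1 - y)) / ln 2)"
      using 1 2 by (simp add: divide_right_mono add_divide_distrib[symmetric] algebra_simps)
  qed
  show ?thesis unfolding convex_on_def
  proof (intro conjI ballI allI impI)
    fix x y u v :: real assume xy: "x \<in> {0..1}" "y \<in> {0..1}" and uv: "0 \<le> u" "0 \<le> v" "u + v = 1"
    have m1: "0 \<le> u * x + v * y" using xy uv by simp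
    have m2: "u * x + v * y \<le> 1" using xy uv by (intro convex_bound_le) auto
    have "(\<lambda>x::real. (x * ln x + (1 - x) * ln (1 - x)) / ln 2) (u *\<^sub>R x + v *\<^sub>R y) \<le> u * (\<lambda>x::real. (x * ln x + (1 - x) * ln (1 - x)) / ln 2) x + v * (\<lambda>x::real. (x * ln x + (1 - x) * ln (1 - x)) / ln 2) y"
      using c[unfolded convex_on_def] xy uv by blast
    moreover have e1: "- bin_entropy (u * x + v * y) = ((u * x + v * y) * ln (u * x + v * y) + (1 - (u * x + v * y)) * ln (1 - (u * x + v * y))) / ln 2"
      using h_alt[of "u * x + v * y"] m1 m2 by (simp add: field_simps)
    moreover have e2: "- bin_entropy x = (x * ln x + (1 - x) * ln (1 - x)) / ln 2"
      using h_alt[of x] xy by (simp add: field_simps)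
    moreover have e3: "- bin_entropy y = (y * ln y + (1 - y) * ln (1 - y)) / ln 2"
      using h_alt[of y] xy by (simp add: field_simps)
    ultimately show "- bin_entropy (u *\<^sub>R x + v *\<^sub>R y) \<le> u * - bin_entropy x + v * - bin_entropy y"
      by (simp only: real_scaleR_def)
  qed simp
qed

lemma h_nonneg: assumes "0 \<le> x" "x \<le> 1" shows "0 \<le> bin_entropy x"
proof -
  have "x * ln x \<le> 0" using assms by (cases "x = 0") (auto simp: mult_nonneg_nonpos)
  moreover have "(1-x) * ln (1-x) \<le> 0" using assms by (cases "x = 1") (auto simp: mult_nonneg_nonpos)
  ultimately show ?thesis using assms by (simp add: h_alt divide_nonneg_pos)
qed

lemma h_pos: assumes "0 < x" "x < 1" shows "0 < bin_entropy x"
proof -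
  have "x * ln x < 0" using assms by (simp add: mult_pos_neg)
  moreover have "(1-x) * ln (1-x) < 0" using assms by (simp add: mult_pos_neg)
  ultimately show ?thesis using assms by (simp add: h_alt divide_pos_pos)
qed

lemma h_deriv: assumes "0 < x" "x < 1"
  shows "DERIV bin_entropy x :> (ln (1 - x) - ln x) / ln 2"
proof -
  have "DERIV (\<lambda>x. - (x * ln x + (1 - x) * ln (1 - x)) / ln 2) x :> (ln (1 - x) - ln x) / ln 2"
    using assms by (auto intro!: derivative_eq_intros)
  then show ?thesis
    by (rule has_field_derivative_transform_within_open[where S="{0<..<1}"]) (use assms in \<open>auto simp: h_alt\<close>)
qed

lemma h_half: "bin_entropy (1/2) = 1"
  unfolding bin_entropy_def by simp

lemma h_one: "bin_entropy 1 = 0"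
  unfolding bin_entropy_def by simp

lemma h_strict: assumes "1/2 \<le> x" "x < y" "y \<le> 1" shows "bin_entropy y < bin_entropy x"
proof (cases "y = 1")
  case True then show ?thesis using h_pos[of x] assms by (simp add: h_one)
next
  case False
  show ?thesis
  proof (rule DERIV_neg_imp_decreasing_open[OF assms(2)])
    fix z assume z: "x < z" "z < y"
    have "ln (1 - z) < ln z" using z assms by simp
    then show "\<exists>d. DERIV bin_entropy z :> d \<and> d < 0"
      using h_deriv[of z] z assms False by (intro exI[of _ "(ln (1 - z) - ln z) / ln 2"]) (auto simp: divide_neg_pos)
  next
    show "continuous_on {x..y} bin_entropy"
      by (intro continuous_at_imp_continuous_on ballI DERIV_isCont[OF h_deriv]) (use assms False in auto)
  qed
qed

lemma h_lim: "(bin_entropy \<longlongrightarrow> 0) (at_left 1)"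
proof -
  have "((\<lambda>x::real. - (x * ln x + (1 - x) * ln (1 - x)) / ln 2) \<longlongrightarrow> 0) (at_left 1)"
    by real_asymp
  then show ?thesis
    by (rule Lim_transform_eventually)
       (rule eventually_mono[OF eventually_at_left_real[of 0 1]], auto simp: h_alt)
qed

lemma hinv_props: assumes "0 \<le> y" "y \<le> 1"
  shows "bin_entropy_inv y \<in> {1/2..1} \<and> bin_entropy (bin_entropy_inv y) = y"
proof -
  have ex: "\<exists>p. p \<in> {1/2..1} \<and> bin_entropy p = y"
  proof (cases "y = 0")
    case True then show ?thesis using h_one by (intro exI[of _ 1]) auto
  next
    case False
    then have "y > 0" using assms by simp
    then have "\<forall>\<^sub>F x in at_left 1. bin_entropy x < y" using h_lim order_tendstoD(2) by blast
    moreover have "\<forall>\<^sub>F x in at_left (1::real). x \<in> {1/2<..<1}" by (rule eventually_at_left_real) simp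
    ultimately have "\<forall>\<^sub>F x in at_left (1::real). x > 1/2 \<and> x < 1 \<and> bin_entropy x < y"
      by eventually_elim auto
    then obtain b where b: "b > 1/2" "b < 1" "bin_entropy b < y"
      using eventually_happens'[OF trivial_limit_at_left_real] by blast
    have "\<exists>x. 1/2 \<le> x \<and> x \<le> b \<and> bin_entropy x = y"
    proof (rule IVT2)
      show "bin_entropy b \<le> y" using b by simp
      show "y \<le> bin_entropy (1/2)" using assms h_half by simp
      show "1/2 \<le> b" using b by simp
      show "\<forall>x. 1 / 2 \<le> x \<and> x \<le> b \<longrightarrow> isCont bin_entropy x"
        using b by (auto intro: DERIV_isCont[OF h_deriv])
    qed
    then show ?thesis using b by auto
  qed
  have un: "p = p'" if "p \<in> {1/2..1}" "bin_entropy p = y" "p' \<in> {1/2..1}" "bin_entropy p' = y" for p p'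
    using h_strict[of p p'] h_strict[of p' p] that by (cases p p' rule: linorder_cases) auto
  show ?thesis unfolding bin_entropy_inv_def
    using theI'[of "\<lambda>p. p \<in> {1/2..1} \<and> bin_entropy p = y"] ex un by blast
qed

definition fr :: "nat \<Rightarrow> (nat \<Rightarrow> bool) set \<Rightarrow> real" where
  "fr j U = real (card {k\<in>U. k j}) / real (card U)"

lemma fr_bounds: assumes "finite U" shows "0 \<le> fr j U \<and> fr j U \<le> 1"
proof (cases "U = {}")
  case True then show ?thesis by (simp add: fr_def)
next
  case False
  have "card {k\<in>U. k j} \<le> card U" using assms by (intro card_mono) auto
  moreover have "0 < card U" using False assms by (simp add: card_gt_0_iff)
  ultimately show ?thesis by (simp add: fr_def divide_le_eq_1)
qed

lemma grouping:
  fixes n0 n1 :: nat assumes "n0 > 0" "n1 > 0"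
  shows "log 2 (real (n1 + n0)) = bin_entropy (real n1 / real (n1 + n0))
     + (real n1 / real (n1 + n0)) * log 2 (real n1) + (real n0 / real (n1 + n0)) * log 2 (real n0)"
proof -
  define n where "n = real (n1 + n0)"
  have n: "n > 0" "n = real n1 + real n0" using assms by (auto simp: n_def)
  have t1: "1 - real n1 / n = real n0 / n" using n by (simp add: field_simps)
  have l1: "log 2 (1 / (real n1 / n)) = log 2 n - log 2 (real n1)"
    using n assms by (simp add: log_divide)
  have l0: "log 2 (1 / (real n0 / n)) = log 2 n - log 2 (real n0)"
    using n assms by (simp add: log_divide)
  have "bin_entropy (real n1 / n) = (real n1 / n) * (log 2 n - log 2 (real n1)) + (real n0 / n) * (log 2 n - log 2 (real n0))"
    unfolding bin_entropy_def t1 l1 l0 by simp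
  also have "\<dots> = log 2 n - (real n1 / n) * log 2 (real n1) - (real n0 / n) * log 2 (real n0)"
    using n by (simp add: field_simps)
  finally show ?thesis unfolding n_def[symmetric] by simp
qed

lemma subadd:
  assumes "finite I" "finite U" "U \<noteq> {}"
    and "\<And>k k'. k \<in> U \<Longrightarrow> k' \<in> U \<Longrightarrow> (\<forall>j\<in>I. k j = k' j) \<Longrightarrow> k = k'"
  shows "log 2 (real (card U)) \<le> (\<Sum>j\<in>I. bin_entropy (fr j U))"
  using assms
proof (induction I arbitrary: U rule: finite_induct)
  case empty
  then obtain k where k: "k \<in> U" by blast
  then have "U = {k}" using empty by auto
  then show ?case by simp
next
  case (insert i I U)
  define U1 where "U1 = {k\<in>U. k i}"
  define U0 where "U0 = {k\<in>U. \<not> k i}"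
  have fin: "finite U1" "finite U0" using insert by (auto simp: U1_def U0_def)
  have UU: "U = U1 \<union> U0" "U1 \<inter> U0 = {}" by (auto simp: U1_def U0_def)
  have cU: "card U = card U1 + card U0" using UU fin by (simp add: card_Un_disjoint)
  have hnn: "0 \<le> bin_entropy (fr i U)" using fr_bounds[OF insert.prems(1)] h_nonneg by blast
  show ?case
  proof (cases "U1 = {} \<or> U0 = {}")
    case True
    have "log 2 (real (card U)) \<le> (\<Sum>j\<in>I. bin_entropy (fr j U))"
    proof (rule insert.IH[OF insert.prems(1,2)])
      fix k k' assume kk: "k \<in> U" "k' \<in> U" "\<forall>j\<in>I. k j = k' j"
      have "k i = k' i" using True kk unfolding U1_def U0_def by blast
      then have "\<forall>j\<in>insert i I. k j = k' j" using kk(3) by blast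
      then show "k = k'" using insert.prems(3)[OF kk(1,2)] by blast
    qed
    then show ?thesis using insert.hyps hnn by simp
  next
    case False
    then have ne: "U1 \<noteq> {}" "U0 \<noteq> {}" by auto
    have pos: "card U1 > 0" "card U0 > 0" using ne fin by (auto simp: card_gt_0_iff)
    have IH1: "log 2 (real (card U1)) \<le> (\<Sum>j\<in>I. bin_entropy (fr j U1))"
    proof (rule insert.IH[OF fin(1) ne(1)])
      fix k k' assume kk: "k \<in> U1" "k' \<in> U1" "\<forall>j\<in>I. k j = k' j"
      then have "k \<in> U" "k' \<in> U" "\<forall>j\<in>insert i I. k j = k' j" by (auto simp: U1_def)
      then show "k = k'" by (rule insert.prems(3))
    qed
    have IH0: "log 2 (real (card U0)) \<le> (\<Sum>j\<in>I. bin_entropy (fr j U0))"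
    proof (rule insert.IH[OF fin(2) ne(2)])
      fix k k' assume kk: "k \<in> U0" "k' \<in> U0" "\<forall>j\<in>I. k j = k' j"
      then have "k \<in> U" "k' \<in> U" "\<forall>j\<in>insert i I. k j = k' j" by (auto simp: U0_def)
      then show "k = k'" by (rule insert.prems(3))
    qed
    define t where "t = real (card U1) / real (card U)"
    have t01: "0 \<le> t" "t \<le> 1" using cU pos by (auto simp: t_def divide_le_eq_1)
    have t1: "1 - t = real (card U0) / real (card U)" using cU pos by (simp add: t_def field_simps)
    have frt: "fr i U = t" unfolding fr_def t_def U1_def by simp
    have g: "log 2 (real (card U)) = bin_entropy t + t * log 2 (real (card U1)) + (1 - t) * log 2 (real (card U0))"
      using grouping[OF pos(2) pos(1)] unfolding t1 unfolding t_def cU by simp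
    have conc: "t * bin_entropy (fr j U1) + (1 - t) * bin_entropy (fr j U0) \<le> bin_entropy (fr j U)" for j
    proof -
      have c1: "card {k\<in>U. k j} = card {k\<in>U1. k j} + card {k\<in>U0. k j}"
      proof -
        have "{k\<in>U. k j} = {k\<in>U1. k j} \<union> {k\<in>U0. k j}" using UU by auto
        moreover have "card ({k\<in>U1. k j} \<union> {k\<in>U0. k j}) = card {k\<in>U1. k j} + card {k\<in>U0. k j}"
          by (rule card_Un_disjoint) (use fin UU in auto)
        ultimately show ?thesis by simp
      qed
      have fe: "fr j U = (1 - t) * fr j U0 + t * fr j U1"
      proof -
        have "real (card U) > 0" using pos cU by simp
        have e0: "(real (card U0) / real (card U)) * (real (card {k\<in>U0. k j}) / real (card U0)) = real (card {k\<in>U0. k j}) / real (card U)"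
          using pos by simp
        have e1: "(real (card U1) / real (card U)) * (real (card {k\<in>U1. k j}) / real (card U1)) = real (card {k\<in>U1. k j}) / real (card U)"
          using pos by simp
        show ?thesis unfolding fr_def t1 unfolding t_def c1 e0 e1 by (simp add: add_divide_distrib)
      qed
      have "- bin_entropy ((1 - t) *\<^sub>R fr j U0 + t *\<^sub>R fr j U1) \<le> (1 - t) * - bin_entropy (fr j U0) + t * - bin_entropy (fr j U1)"
        by (rule convex_onD[OF negh_convex]) (use t01 fr_bounds fin in auto)
      then show ?thesis using fe by simp
    qed
    have "log 2 (real (card U)) \<le> bin_entropy t + t * (\<Sum>j\<in>I. bin_entropy (fr j U1)) + (1 - t) * (\<Sum>j\<in>I. bin_entropy (fr j U0))"
    proof -
      have a1: "t * log 2 (real (card U1)) \<le> t * (\<Sum>j\<in>I. bin_entropy (fr j U1))"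
        by (rule mult_left_mono[OF IH1 t01(1)])
      have a0: "(1 - t) * log 2 (real (card U0)) \<le> (1 - t) * (\<Sum>j\<in>I. bin_entropy (fr j U0))"
        by (rule mult_left_mono[OF IH0]) (use t01 in simp)
      show ?thesis unfolding g using a1 a0 by linarith
    qed
    also have "\<dots> = bin_entropy t + (\<Sum>j\<in>I. t * bin_entropy (fr j U1) + (1 - t) * bin_entropy (fr j U0))"
      by (simp add: sum_distrib_left sum.distrib)
    also have "\<dots> \<le> bin_entropy t + (\<Sum>j\<in>I. bin_entropy (fr j U))"
      by (intro add_left_mono sum_mono conc)
    also have "\<dots> = (\<Sum>j\<in>insert i I. bin_entropy (fr j U))"
      by (subst sum.insert[OF insert.hyps(1,2)]) (simp only: frt)
    finally show ?thesis .
  qed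
qed

definition agr :: "nat \<Rightarrow> (nat \<Rightarrow> nat) \<Rightarrow> (nat \<Rightarrow> bool) \<Rightarrow> (nat \<Rightarrow> bool) \<Rightarrow> bool" where
  "agr r p k k' \<longleftrightarrow> (\<forall>i\<in>{1..r}. k (p i) = k' (p i))"

definition pat :: "nat \<Rightarrow> (nat \<Rightarrow> nat) \<Rightarrow> (nat \<Rightarrow> bool) \<Rightarrow> (nat \<Rightarrow> bool)" where
  "pat r p k = restrict (\<lambda>i. k (p i)) {1..r}"

definition cls :: "(nat \<Rightarrow> bool) set \<Rightarrow> nat \<Rightarrow> (nat \<Rightarrow> nat) \<Rightarrow> (nat \<Rightarrow> bool) \<Rightarrow> (nat \<Rightarrow> bool) set" where
  "cls T r p k = {k'\<in>T. agr r p k k'}"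

definition cp :: "(nat \<Rightarrow> bool) set \<Rightarrow> nat \<Rightarrow> (nat \<Rightarrow> nat) \<Rightarrow> real" where
  "cp T r p = (\<Sum>k\<in>T. real (card (cls T r p k)))"

lemma pat_eq: "pat r p k = pat r p k' \<longleftrightarrow> agr r p k k'"
proof
  assume "pat r p k = pat r p k'"
  then have "\<forall>i\<in>{1..r}. pat r p k i = pat r p k' i" by simp
  then show "agr r p k k'" unfolding agr_def pat_def by simp
next
  assume "agr r p k k'"
  then show "pat r p k = pat r p k'" unfolding pat_def agr_def by (intro restrict_ext) simp
qed

lemma pat_in: "pat r p k \<in> PiE {1..r} (\<lambda>_. UNIV)"
  unfolding pat_def by simp

lemma pat_eq_x: assumes "x \<in> PiE {1..r} (\<lambda>_. UNIV)"
  shows "pat r p k = x \<longleftrightarrow> (\<forall>j\<in>{1..r}. k (p j) = x j)"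
proof
  assume "pat r p k = x" then show "\<forall>j\<in>{1..r}. k (p j) = x j" unfolding pat_def by force
next
  assume a: "\<forall>j\<in>{1..r}. k (p j) = x j"
  show "pat r p k = x"
    by (rule PiE_ext[OF pat_in assms]) (use a in \<open>simp add: pat_def\<close>)
qed

lemma cp_sq: assumes "finite T"
  shows "cp T r p = (\<Sum>x\<in>PiE {1..r} (\<lambda>_. UNIV). (real (card {k\<in>T. pat r p k = x}))^2)"
proof -
  let ?X = "PiE {1..r} (\<lambda>_. UNIV :: bool set)"
  have fX: "finite ?X" by (simp add: finite_PiE)
  have "cp T r p = (\<Sum>x\<in>?X. \<Sum>k\<in>{k. k \<in> T \<and> pat r p k = x}. real (card (cls T r p k)))"
    unfolding cp_def by (rule sum.group[symmetric, OF assms fX]) (use pat_in in blast)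
  also have "\<dots> = (\<Sum>x\<in>?X. \<Sum>k\<in>{k. k \<in> T \<and> pat r p k = x}. real (card {k\<in>T. pat r p k = x}))"
  proof (intro sum.cong refl)
    fix x k assume "k \<in> {k. k \<in> T \<and> pat r p k = x}"
    then have "cls T r p k = {k\<in>T. pat r p k = x}" unfolding cls_def by (auto simp: pat_eq[symmetric])
    then show "real (card (cls T r p k)) = real (card {k\<in>T. pat r p k = x})" by simp
  qed
  also have "\<dots> = (\<Sum>x\<in>?X. (real (card {k\<in>T. pat r p k = x}))^2)"
    by (simp add: power2_eq_square)
  finally show ?thesis .
qed

lemma card_sum: assumes "finite T"
  shows "real (card T) = (\<Sum>x\<in>PiE {1..r} (\<lambda>_. UNIV). real (card {k\<in>T. pat r p k = x}))"
proof -
  have fX: "finite (PiE {1..r} (\<lambda>_. UNIV :: bool set))" by (simp add: finite_PiE)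
  have "real (card T) = (\<Sum>k\<in>T. 1)" by simp
  also have "\<dots> = (\<Sum>x\<in>PiE {1..r} (\<lambda>_. UNIV). \<Sum>k\<in>{k. k \<in> T \<and> pat r p k = x}. 1)"
    by (rule sum.group[symmetric, OF assms fX]) (use pat_in in blast)
  finally show ?thesis by simp
qed

lemma cp_lower: assumes "finite T"
  shows "real (card T) ^ 2 \<le> cp T r p * 2 ^ r"
proof -
  have cX: "card (PiE {1..r} (\<lambda>_. UNIV :: bool set)) = 2 ^ r" by (simp add: card_PiE)
  show ?thesis
    using sum_squared_le_sum_of_squares[of "\<lambda>x. real (card {k\<in>T. pat r p k = x})" "PiE {1..r} (\<lambda>_. UNIV)"]
    unfolding card_sum[OF assms, of r p, symmetric] cp_sq[OF assms, of r p, symmetric] cX by simp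
qed

lemma cls_sub: "cls T r p k \<subseteq> T" unfolding cls_def by auto

lemma agr_refl: "agr r p k k" unfolding agr_def by simp

lemma nlogn:
  fixes n M :: real and r :: nat
  assumes "n > 0" "M > 0"
  shows "n * log 2 n \<ge> n * (log 2 M - r) + (n - M / 2 ^ r) / ln 2"
proof -
  define z where "z = n * 2 ^ r / M"
  have z: "z > 0" using assms by (simp add: z_def)
  have lz: "log 2 z = log 2 n + r - log 2 M"
    using assms by (simp add: z_def log_mult log_divide log_nat_power)
  have "ln (1 / z) \<le> 1 / z - 1" using z by (intro ln_le_minus_one) simp
  then have lnz: "ln z \<ge> 1 - 1 / z" using z by (simp add: ln_div)
  have "n * ln z \<ge> n * (1 - 1 / z)" using lnz assms by (simp add: mult_left_mono)
  also have "n * (1 - 1 / z) = n - M / 2 ^ r" using assms by (simp add: z_def field_simps)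
  finally have a: "n * ln z \<ge> n - M / 2 ^ r" .
  have "n * log 2 n = n * (log 2 M - r) + n * log 2 z" unfolding lz by (simp add: algebra_simps)
  also have "n * log 2 z = n * ln z / ln 2" by (simp add: log_def)
  finally show ?thesis using a by (simp add: divide_right_mono)
qed

lemma step:
  fixes T :: "(nat \<Rightarrow> bool) set" and N r :: nat and p :: "nat \<Rightarrow> nat" and q :: real
  assumes fT: "finite T" and neT: "T \<noteq> {}" and Tc: "T \<subseteq> cube N" and N: "N \<ge> 1"
    and q: "1/2 \<le> q" "q \<le> 1" and hq: "bin_entropy q \<le> (log 2 (real (card T)) - r) / N"
  shows "(\<Sum>j\<in>{1..N}. \<Sum>k\<in>T. real (card {k'\<in>T. agr r p k k' \<and> k' j = k j})) \<le> q * N * cp T r p"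
proof -
  define C where "C k = cls T r p k" for k
  define n where "n k = real (card (C k))" for k
  define tt where "tt j k = max (fr j (C k)) (1 - fr j (C k))" for j k
  define M where "M = real (card T)"
  have Mpos: "M > 0" using fT neT by (simp add: M_def card_gt_0_iff)
  have Cfin: "finite (C k)" for k using fT cls_sub[of T r p k] by (simp add: C_def finite_subset)
  have kC: "k \<in> C k" if "k \<in> T" for k using that agr_refl by (simp add: C_def cls_def)
  have npos: "n k \<ge> 1" if "k \<in> T" for k
  proof -
    have "C k \<noteq> {}" using kC[OF that] by blast
    then have "card (C k) \<ge> 1" using Cfin[of k] by (simp add: Suc_le_eq card_gt_0_iff)
    then show ?thesis by (simp add: n_def)
  qed
  have ttb: "1/2 \<le> tt j k \<and> tt j k \<le> 1" for j k
    using fr_bounds[OF Cfin, of j k] by (cases "fr j (C k) \<le> 1 - fr j (C k)") (auto simp: tt_def max_def)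
  have i: "real (card {k'\<in>T. agr r p k k' \<and> k' j = k j}) \<le> n k * tt j k" if kT: "k \<in> T" for j k
  proof -
    have e: "{k'\<in>T. agr r p k k' \<and> k' j = k j} = {k'\<in>C k. k' j = k j}"
      by (auto simp: C_def cls_def)
    have np: "n k > 0" using npos[OF kT] by simp
    have split: "card (C k) = card {k'\<in>C k. k' j} + card {k'\<in>C k. \<not> k' j}"
    proof -
      have "C k = {k'\<in>C k. k' j} \<union> {k'\<in>C k. \<not> k' j}" by blast
      moreover have "card ({k'\<in>C k. k' j} \<union> {k'\<in>C k. \<not> k' j}) = card {k'\<in>C k. k' j} + card {k'\<in>C k. \<not> k' j}"
        by (rule card_Un_disjoint) (use Cfin[of k] in auto)
      ultimately show ?thesis by simp
    qed
    have f1: "real (card {k'\<in>C k. k' j}) = fr j (C k) * n k"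
      using np by (simp add: fr_def n_def)
    have s2: "real (card {k'\<in>C k. \<not> k' j}) = n k - real (card {k'\<in>C k. k' j})"
      using split unfolding n_def by linarith
    have f0: "real (card {k'\<in>C k. \<not> k' j}) = (1 - fr j (C k)) * n k"
      unfolding s2 f1 by (simp add: algebra_simps)
    show ?thesis
    proof (cases "k j")
      case True
      then have "{k'\<in>C k. k' j = k j} = {k'\<in>C k. k' j}" by auto
      then show ?thesis unfolding e using f1 np by (simp add: tt_def mult.commute mult_left_mono)
    next
      case False
      then have "{k'\<in>C k. k' j = k j} = {k'\<in>C k. \<not> k' j}" by auto
      then show ?thesis unfolding e using f0 np by (simp add: tt_def mult.commute mult_left_mono)
    qed
  qed
  have cpn: "cp T r p = (\<Sum>k\<in>T. n k)" by (simp add: cp_def n_def C_def)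
  have cppos: "cp T r p > 0"
  proof -
    have "(\<Sum>k\<in>T. n k) \<ge> (\<Sum>k\<in>T. 1)" by (rule sum_mono) (rule npos)
    moreover have "card T > 0" using fT neT by (simp add: card_gt_0_iff)
    ultimately show ?thesis using cpn by simp
  qed
  define W where "W = real N * cp T r p"
  have Wpos: "W > 0" using N cppos by (simp add: W_def)
  define S where "S = T \<times> {1..N}"
  have fS: "finite S" and neS: "S \<noteq> {}" using fT neT N by (auto simp: S_def)
  define a where "a kj = n (fst kj) / W" for kj :: "(nat \<Rightarrow> bool) \<times> nat"
  have sumS: "(\<Sum>kj\<in>S. f (fst kj) (snd kj)) = (\<Sum>k\<in>T. \<Sum>j\<in>{1..N}. f k j)" for f :: "_ \<Rightarrow> nat \<Rightarrow> real"
    unfolding S_def by (simp add: sum.cartesian_product case_prod_beta)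
  have a1: "(\<Sum>kj\<in>S. a kj) = 1"
  proof -
    have "(\<Sum>kj\<in>S. a kj) = (\<Sum>k\<in>T. \<Sum>j\<in>{1..N}. n k / W)"
      using sumS[of "\<lambda>k j. n k / W"] by (simp add: a_def)
    also have "\<dots> = (\<Sum>k\<in>T. real N * n k) / W" by (simp add: sum_divide_distrib)
    also have "\<dots> = (\<Sum>k\<in>T. n k) * real N / W" by (simp add: sum_distrib_left[symmetric] mult.commute)
    also have "\<dots> = 1" using cppos N by (simp add: W_def cpn[symmetric])
    finally show ?thesis .
  qed
  have a0: "a kj \<ge> 0" if "kj \<in> S" for kj
  proof -
    have "fst kj \<in> T" using that by (auto simp: S_def)
    then have "0 \<le> n (fst kj)" using npos by fastforce
    then show ?thesis using Wpos by (simp add: a_def)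
  qed
  define tbar where "tbar = (\<Sum>kj\<in>S. a kj * tt (snd kj) (fst kj))"
  have jensen: "- bin_entropy (\<Sum>kj\<in>S. a kj *\<^sub>R tt (snd kj) (fst kj)) \<le> (\<Sum>kj\<in>S. a kj * - bin_entropy (tt (snd kj) (fst kj)))"
  proof (rule convex_on_sum[OF fS neS negh_convex a1 a0])
    fix kj assume "kj \<in> S"
    show "tt (snd kj) (fst kj) \<in> {0..1}" using ttb[of "snd kj" "fst kj"] by simp
  qed
  have htt: "bin_entropy (tt j k) = bin_entropy (fr j (C k))" for j k
    by (simp add: tt_def max_def h_sym)
  have hbar1: "bin_entropy tbar \<ge> (\<Sum>kj\<in>S. a kj * bin_entropy (fr (snd kj) (C (fst kj))))"
    using jensen by (simp add: tbar_def htt sum_negf)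
  have sub: "(\<Sum>j\<in>{1..N}. bin_entropy (fr j (C k))) \<ge> log 2 (n k)" if kT: "k \<in> T" for k
    unfolding n_def
  proof (rule subadd)
    show "C k \<noteq> {}" using kC[OF kT] by blast
    fix k1 k2 assume k12: "k1 \<in> C k" "k2 \<in> C k" "\<forall>j\<in>{1..N}. k1 j = k2 j"
    have "k1 \<in> cube N" "k2 \<in> cube N" using k12(1,2) cls_sub[of T r p k] Tc unfolding C_def by blast+
    then show "k1 = k2" unfolding cube_def using k12(3) by (intro PiE_ext) auto
  qed (use Cfin in auto)
  have "(\<Sum>kj\<in>S. a kj * bin_entropy (fr (snd kj) (C (fst kj)))) = (\<Sum>k\<in>T. n k / W * (\<Sum>j\<in>{1..N}. bin_entropy (fr j (C k))))"
    using sumS[of "\<lambda>k j. n k / W * bin_entropy (fr j (C k))"] by (simp add: a_def sum_distrib_left)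
  also have "\<dots> \<ge> (\<Sum>k\<in>T. n k / W * log 2 (n k))"
  proof (rule sum_mono)
    fix k assume kT: "k \<in> T"
    have "0 \<le> n k / W" using npos[OF kT] Wpos by simp
    then show "n k / W * log 2 (n k) \<le> n k / W * (\<Sum>j\<in>{1..N}. bin_entropy (fr j (C k)))"
      by (rule mult_left_mono[OF sub[OF kT]])
  qed
  finally have hbar2: "bin_entropy tbar \<ge> (\<Sum>k\<in>T. n k * log 2 (n k)) / W"
    using hbar1 by (simp add: sum_divide_distrib)
  have "(\<Sum>k\<in>T. n k * log 2 (n k)) \<ge> (\<Sum>k\<in>T. n k * (log 2 M - r) + (n k - M / 2 ^ r) / ln 2)"
  proof (rule sum_mono)
    fix k assume "k \<in> T"
    then have "n k > 0" using npos[of k] by simp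
    then show "n k * (log 2 M - r) + (n k - M / 2 ^ r) / ln 2 \<le> n k * log 2 (n k)"
      using Mpos by (rule nlogn)
  qed
  also have "(\<Sum>k\<in>T. n k * (log 2 M - r) + (n k - M / 2 ^ r) / ln 2) = cp T r p * (log 2 M - r) + (cp T r p - M * M / 2 ^ r) / ln 2"
    by (simp add: cpn sum.distrib sum_distrib_right[symmetric] sum_divide_distrib[symmetric] sum_subtractf M_def)
  finally have nl: "(\<Sum>k\<in>T. n k * log 2 (n k)) \<ge> cp T r p * (log 2 M - r) + (cp T r p - M * M / 2 ^ r) / ln 2" .
  have "M * M \<le> cp T r p * 2 ^ r" using cp_lower[OF fT, of r p] by (simp add: M_def power2_eq_square)
  then have "cp T r p - M * M / 2 ^ r \<ge> 0" by (simp add: field_simps)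
  then have "(\<Sum>k\<in>T. n k * log 2 (n k)) \<ge> cp T r p * (log 2 M - r)" using nl by (smt (verit) divide_nonneg_pos ln_gt_zero one_less_numeral_iff semiring_norm(76))
  then have "bin_entropy tbar \<ge> cp T r p * (log 2 M - r) / W" using hbar2 Wpos by (smt (verit) divide_right_mono)
  also have "cp T r p * (log 2 M - r) / W = (log 2 M - r) / N" using cppos N by (simp add: W_def)
  finally have htb: "bin_entropy tbar \<ge> bin_entropy q" using hq by (simp add: M_def)
  have tb_lo: "tbar \<ge> 1/2"
  proof -
    have "(\<Sum>kj\<in>S. a kj * (1/2)) \<le> tbar" unfolding tbar_def using ttb a0 by (intro sum_mono mult_left_mono) auto
    then show ?thesis using a1 by (simp add: sum_divide_distrib[symmetric])
  qed
  have tbq: "tbar \<le> q"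
  proof (rule ccontr)
    assume "\<not> tbar \<le> q"
    then have "bin_entropy tbar < bin_entropy q" using h_strict[of q tbar] q
    proof -
      have "tbar \<le> 1"
      proof -
        have "tbar \<le> (\<Sum>kj\<in>S. a kj * 1)" unfolding tbar_def using ttb a0 by (intro sum_mono mult_left_mono) auto
        then show ?thesis using a1 by simp
      qed
      then show ?thesis using h_strict[of q tbar] q \<open>\<not> tbar \<le> q\<close> by simp
    qed
    then show False using htb by simp
  qed
  have "(\<Sum>j\<in>{1..N}. \<Sum>k\<in>T. real (card {k'\<in>T. agr r p k k' \<and> k' j = k j})) \<le> (\<Sum>j\<in>{1..N}. \<Sum>k\<in>T. n k * tt j k)"
    using i by (intro sum_mono) auto
  also have "\<dots> = (\<Sum>k\<in>T. \<Sum>j\<in>{1..N}. n k * tt j k)" by (rule sum.swap)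
  also have "\<dots> = W * tbar"
    using sumS[of "\<lambda>k j. n k * tt j k"] Wpos by (simp add: tbar_def a_def sum_distrib_left)
  also have "\<dots> \<le> W * q" using tbq Wpos by simp
  finally show ?thesis by (simp add: W_def mult.commute mult.left_commute)
qed

lemma g_eq: assumes "finite (fiber N Psi lam)"
  shows "g_fun N Psi lam r p = cp (fiber N Psi lam) r p / real (card (fiber N Psi lam)) ^ 2"
proof -
  let ?T = "fiber N Psi lam"
  let ?X = "PiE {1..r} (\<lambda>_. UNIV :: bool set)"
  have "g_fun N Psi lam r p = (\<Sum>x\<in>?X. (real (card {k\<in>?T. pat r p k = x}) / real (card ?T))^2)"
    unfolding g_fun_def cond_prob_def
  proof (intro sum.cong refl)
    fix x assume x: "x \<in> ?X"
    have "{k\<in>?T. \<forall>j\<in>{1..r}. k (p j) = x j} = {k\<in>?T. pat r p k = x}"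
      by (simp only: pat_eq_x[OF x])
    then show "(real (card {k\<in>?T. \<forall>j\<in>{1..r}. k (p j) = x j}) / real (card ?T))\<^sup>2 =
         (real (card {k\<in>?T. pat r p k = x}) / real (card ?T))\<^sup>2" by simp
  qed
  also have "\<dots> = (\<Sum>x\<in>?X. (real (card {k\<in>?T. pat r p k = x}))^2) / real (card ?T) ^ 2"
    by (simp add: power_divide sum_divide_distrib)
  also have "\<dots> = cp ?T r p / real (card ?T) ^ 2" using cp_sq[OF assms, of r p] by simp
  finally show ?thesis .
qed

lemma cls_suc: "cls T (Suc r) (p(Suc r := j)) k = {k'\<in>T. agr r p k k' \<and> k' j = k j}"
proof -
  have "agr (Suc r) (p(Suc r := j)) k k' \<longleftrightarrow> agr r p k k' \<and> k' j = k j" for k'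
  proof -
    have ins: "{1..Suc r} = insert (Suc r) {1..r}" by auto
    have b: "(\<forall>i\<in>{1..r}. k ((p(Suc r := j)) i) = k' ((p(Suc r := j)) i)) \<longleftrightarrow> (\<forall>i\<in>{1..r}. k (p i) = k' (p i))"
      by (rule ball_cong) auto
    show ?thesis unfolding agr_def ins by (simp only: ball_simps b fun_upd_same) auto
  qed
  then show ?thesis unfolding cls_def by auto
qed

theorem lemma5:
  fixes N d :: nat and \<alpha> :: real and Psi :: "(nat \<Rightarrow> bool) \<Rightarrow> 'l" and L :: "'l set" and lam :: 'l
  assumes "finite L"
    and "Psi ` cube N \<subseteq> L"
    and "lam \<in> L"
    and "fiber N Psi lam \<noteq> {}"
    and "1 \<le> d"
    and "\<alpha> \<ge> 0"
    and "\<alpha> + real d \<le> real N"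
    and "log 2 (real (card (fiber N Psi lam))) \<ge> real N - \<alpha>"
  shows "expected_g N Psi lam d \<le> (bin_entropy_inv (1 - (\<alpha> + real d) / real N)) ^ d"
proof -
  define T where "T = fiber N Psi lam"
  define M where "M = real (card T)"
  have Tc: "T \<subseteq> cube N" by (auto simp: T_def fiber_def)
  have fT: "finite T" using Tc finite_subset[OF Tc] by (simp add: cube_def finite_PiE)
  have neT: "T \<noteq> {}" using assms(4) by (simp add: T_def)
  have Mpos: "M > 0" using fT neT by (simp add: M_def card_gt_0_iff)
  have Nr: "real N \<ge> 1" using assms(5,6,7) by linarith
  then have N1: "N \<ge> 1" by simp
  define y where "y = 1 - (\<alpha> + real d) / real N"
  have y0: "0 \<le> y" using assms(7) Nr by (simp add: y_def field_simps)
  have y1: "y \<le> 1" using assms(5,6) Nr by (simp add: y_def field_simps)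
  define q where "q = bin_entropy_inv y"
  have qp: "q \<in> {1/2..1}" "bin_entropy q = y" using hinv_props[OF y0 y1] by (auto simp: q_def)
  define PP where "PP r = PiE {1..r} (\<lambda>_. {1..N::nat})" for r :: nat
  define A where "A r = (\<Sum>p\<in>PP r. cp T r p)" for r
  have A0: "A 0 = M ^ 2"
  proof -
    have "cls T 0 p k = T" for p k by (auto simp: cls_def agr_def)
    then show ?thesis by (simp add: A_def PP_def cp_def M_def power2_eq_square)
  qed
  have Astep: "A (Suc r) \<le> q * real N * A r" if rd: "r < d" for r
  proof -
    have ins: "{1..Suc r} = insert (Suc r) {1..r}" by auto
    have nin: "Suc r \<notin> {1..r}" by simp
    have "A (Suc r) = (\<Sum>p\<in>(\<lambda>(y, g). g(Suc r := y)) ` ({1..N} \<times> PP r). cp T (Suc r) p)"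
      unfolding A_def PP_def ins PiE_insert_eq by simp
    also have "\<dots> = (\<Sum>jp\<in>{1..N} \<times> PP r. cp T (Suc r) ((snd jp)(Suc r := fst jp)))"
      by (subst sum.reindex[OF inj_combinator[OF nin, of "\<lambda>_. {1..N}", folded PP_def]])
         (simp add: case_prod_beta comp_def)
    also have "\<dots> = (\<Sum>j\<in>{1..N}. \<Sum>p\<in>PP r. cp T (Suc r) (p(Suc r := j)))"
      by (simp add: sum.cartesian_product case_prod_beta)
    also have "\<dots> = (\<Sum>p\<in>PP r. \<Sum>j\<in>{1..N}. \<Sum>k\<in>T. real (card {k'\<in>T. agr r p k k' \<and> k' j = k j}))"
      by (subst sum.swap) (simp add: cp_def cls_suc)
    also have "\<dots> \<le> (\<Sum>p\<in>PP r. q * real N * cp T r p)"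
    proof (rule sum_mono)
      fix p
      have "y \<le> (log 2 (real (card T)) - real r) / real N"
      proof -
        have "real N - \<alpha> - real d \<le> log 2 (real (card T)) - real r"
          using assms(8) rd by (simp add: T_def)
        then have "(real N - \<alpha> - real d) / real N \<le> (log 2 (real (card T)) - real r) / real N"
          using Nr by (simp add: divide_right_mono)
        moreover have "y = (real N - \<alpha> - real d) / real N" using Nr by (simp add: y_def field_simps)
        ultimately show ?thesis by simp
      qed
      then show "(\<Sum>j\<in>{1..N}. \<Sum>k\<in>T. real (card {k'\<in>T. agr r p k k' \<and> k' j = k j})) \<le> q * real N * cp T r p"
        using qp by (intro step[OF fT neT Tc N1]) auto
    qed
    also have "\<dots> = q * real N * A r" by (simp add: A_def sum_distrib_left)
    finally show ?thesis .
  qed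
  have qN: "0 \<le> q * real N" using qp by simp
  have Ab: "A r \<le> (q * real N) ^ r * M ^ 2" if "r \<le> d" for r
    using that
  proof (induction r)
    case 0 then show ?case using A0 by simp
  next
    case (Suc r)
    have "A (Suc r) \<le> q * real N * A r" using Astep Suc.prems by simp
    also have "\<dots> \<le> q * real N * ((q * real N) ^ r * M ^ 2)"
      using Suc.IH Suc.prems qN by (intro mult_left_mono) auto
    finally show ?case by (simp add: algebra_simps)
  qed
  have "expected_g N Psi lam d = (\<Sum>p\<in>PP d. cp T d p / M ^ 2) / real N ^ d"
    unfolding expected_g_def PP_def using g_eq[of N Psi lam] fT by (simp add: T_def M_def)
  also have "\<dots> = A d / M ^ 2 / real N ^ d" by (simp add: A_def sum_divide_distrib)
  also have "\<dots> \<le> (q * real N) ^ d * M ^ 2 / M ^ 2 / real N ^ d"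
    using Ab[of d] Mpos Nr by (intro divide_right_mono) auto
  also have "\<dots> = q ^ d" using Mpos Nr by (simp add: power_mult_distrib)
  finally show ?thesis by (simp add: q_def y_def)
qed

end
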